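(* Let $n\ge2$, $B^n=\{x\in\mathbb R^n:|x|<1\}$, and let $F$ be the Funk metric $$F(x,y)=\frac{\sqrt{|y|^2-(|x|^2|y|^2-\langle x,y\rangle^2)}}{1-|x|^2}+\frac{\langle x,y\rangle}{1-|x|^2},\quad x\in B^n,\ y\in\mathbb R^n,$$ with induced distance $d_F$ and Busemann–Hausdorff measure $\mu$ (which equals Lebesgue measure). Then: (a) ${\sf A}^\mu_\rho(0)=n\omega_n(1-e^{-\rho})^{n-1}e^{-\rho}$ for $\rho>0$, the hypothesis $(\mathbf D)^n_0$ holds, and $(\mathbf{BG})^{n,\kappa}_0$ holds for every $\kappa>0$; (b) $\lambda_{1,d_F}(B^n)=0$.
   Context: The co-metric is $F^*(x,\xi)=|\xi|-\langle x,\xi\rangle$, $d_F(0,x)=-\ln(1-|x|)$. For $u$ Lipschitz with compact support in open $\Omega$, $|\nabla u|_d(x)=\limsup_{y\to x}\frac{u(y)-u(x)}{d(x,y)}$ and $\lambda_{1,d}(\Omega)=\inf_{u\ne0}\int_\Omega|\nabla u|_d^2\,d\mu/\int_\Omega u^2\,d\mu$. $B_\rho(x_0)=\{y:d_F(x_0,y)<\rho\}$, ${\sf A}^\mu_\rho(x_0)=\limsup_{\delta\to0}\mu(B_{\rho+\delta}(x_0)\setminus B_\rho(x_0))/\delta$. $(\mathbf D)^n_{x_0}$: $\liminf_{\rho\to0}{\sf A}^\mu_\rho(x_0)/(n\omega_n\rho^{n-1})=1$, $\omega_n$ the volume of the Euclidean unit ball. $(\mathbf{BG})^{n,\kappa}_{x_0}$: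 $\rho\mapsto{\sf A}^\mu_\rho(x_0)/\sinh^{n-1}(\kappa\rho)$ is non-increasing on $(0,\infty)$. *)

theory Defs
  imports "HOL-Analysis.Analysis"
begin

definition funk_F :: "'a::euclidean_space \<Rightarrow> 'a \<Rightarrow> real" where
  "funk_F x y =
     sqrt ((norm y)\<^sup>2 - ((norm x)\<^sup>2 * (norm y)\<^sup>2 - (x \<bullet> y)\<^sup>2)) / (1 - (norm x)\<^sup>2)
     + (x \<bullet> y) / (1 - (norm x)\<^sup>2)"

definition finsler_length ::
  "('a::euclidean_space \<Rightarrow> 'a \<Rightarrow> real) \<Rightarrow> (real \<Rightarrow> 'a) \<Rightarrow> real" where
  "finsler_length F g = integral {0..1} (\<lambda>t. F (g t) (vector_derivative g (at t)))"

definition finsler_dist ::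
  "('a::euclidean_space \<Rightarrow> 'a \<Rightarrow> real) \<Rightarrow> 'a set \<Rightarrow> 'a \<Rightarrow> 'a \<Rightarrow> real" where
  "finsler_dist F \<Omega> x y = Inf {finsler_length F g | g.
       valid_path g \<and> path_image g \<subseteq> \<Omega> \<and> pathstart g = x \<and> pathfinish g = y \<and>
       (\<lambda>t. F (g t) (vector_derivative g (at t))) integrable_on {0..1}}"

definition unit_ball_vol :: "'a::euclidean_space itself \<Rightarrow> real" where
  "unit_ball_vol TYPE('a) = measure lborel (ball (0::'a) 1)"

definition busemann_hausdorff ::
  "('a::euclidean_space \<Rightarrow> 'a \<Rightarrow> real) \<Rightarrow> 'a set \<Rightarrow> 'a measure" where
  "busemann_hausdorff F \<Omega> = density lborel
     (\<lambda>x. indicator \<Omega> x * (emeasure lborel (ball (0::'a) 1) / emeasure lborel {y. F x y < 1}))"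

definition fball :: "('a \<Rightarrow> 'a \<Rightarrow> real) \<Rightarrow> 'a set \<Rightarrow> 'a \<Rightarrow> real \<Rightarrow> 'a set" where
  "fball d \<Omega> x0 \<rho> = {y \<in> \<Omega>. d x0 y < \<rho>}"

definition area_fn :: "'a measure \<Rightarrow> ('a \<Rightarrow> 'a \<Rightarrow> real) \<Rightarrow> 'a set \<Rightarrow> 'a \<Rightarrow> real \<Rightarrow> ereal" where
  "area_fn \<mu> d \<Omega> x0 \<rho> = Limsup (at_right 0)
     (\<lambda>\<delta>. enn2ereal (emeasure \<mu> (fball d \<Omega> x0 (\<rho> + \<delta>) - fball d \<Omega> x0 \<rho>)) / ereal \<delta>)"

definition hyp_D :: "nat \<Rightarrow> real \<Rightarrow> 'a measure \<Rightarrow> ('a \<Rightarrow> 'a \<Rightarrow> real) \<Rightarrow> 'a set \<Rightarrow> 'a \<Rightarrow> bool" where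
  "hyp_D n \<omega> \<mu> d \<Omega> x0 \<longleftrightarrow>
     Liminf (at_right 0) (\<lambda>\<rho>. area_fn \<mu> d \<Omega> x0 \<rho> / ereal (real n * \<omega> * \<rho> ^ (n - 1))) = 1"

definition hyp_BG :: "nat \<Rightarrow> real \<Rightarrow> 'a measure \<Rightarrow> ('a \<Rightarrow> 'a \<Rightarrow> real) \<Rightarrow> 'a set \<Rightarrow> 'a \<Rightarrow> bool" where
  "hyp_BG n \<kappa> \<mu> d \<Omega> x0 \<longleftrightarrow>
     (\<forall>\<rho>1 \<rho>2. 0 < \<rho>1 \<and> \<rho>1 \<le> \<rho>2 \<longrightarrow>
        area_fn \<mu> d \<Omega> x0 \<rho>2 / ereal (sinh (\<kappa> * \<rho>2) ^ (n - 1))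
        \<le> area_fn \<mu> d \<Omega> x0 \<rho>1 / ereal (sinh (\<kappa> * \<rho>1) ^ (n - 1)))"

definition metric_grad :: "('a::topological_space \<Rightarrow> 'a \<Rightarrow> real) \<Rightarrow> 'a set \<Rightarrow> ('a \<Rightarrow> real) \<Rightarrow> 'a \<Rightarrow> ereal" where
  "metric_grad d \<Omega> u x = Limsup (at x within \<Omega>) (\<lambda>y. ereal ((u y - u x) / d x y))"

definition lip_compact_supp :: "'a::metric_space set \<Rightarrow> ('a \<Rightarrow> real) \<Rightarrow> bool" where
  "lip_compact_supp \<Omega> u \<longleftrightarrow> (\<exists>L. L-lipschitz_on \<Omega> u) \<and>
     (\<exists>K. compact K \<and> K \<subseteq> \<Omega> \<and> (\<forall>x. x \<notin> K \<longrightarrow> u x = 0))"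

definition first_eigenvalue :: "('a::metric_space \<Rightarrow> 'a \<Rightarrow> real) \<Rightarrow> 'a measure \<Rightarrow> 'a set \<Rightarrow> ennreal" where
  "first_eigenvalue d \<mu> \<Omega> =
     (INF u \<in> {u. lip_compact_supp \<Omega> u \<and> (\<exists>x\<in>\<Omega>. u x \<noteq> 0)}.
        (\<integral>\<^sup>+x\<in>\<Omega>. e2ennreal ((metric_grad d \<Omega> u x)\<^sup>2) \<partial>\<mu>) /
        (\<integral>\<^sup>+x\<in>\<Omega>. ennreal ((u x)\<^sup>2) \<partial>\<mu>))"

end

theory Submission
  imports Defs
begin


lemma F_radial:
  fixes x y :: "'a::euclidean_space"
  assumes "0 < norm x" "norm x < 1"
  shows "(x \<bullet> y) / (norm x * (1 - norm x)) \<le> funk_F x y"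
proof -
  define r where "r = norm x"
  define a where "a = x \<bullet> y"
  define b where "b = (norm y)\<^sup>2"
  have r: "0 < r" "r < 1" using assms r_def by auto
  have cs: "a\<^sup>2 \<le> r\<^sup>2 * b"
    unfolding a_def r_def b_def by (metis Cauchy_Schwarz_ineq power2_norm_eq_inner)
  have e: "funk_F x y = (sqrt (b * (1 - r\<^sup>2) + a\<^sup>2) + a) / (1 - r\<^sup>2)"
    unfolding funk_F_def r_def[symmetric] a_def[symmetric] b_def[symmetric]
    by (simp add: add_divide_distrib algebra_simps)
  have "(\<bar>a\<bar>/r)\<^sup>2 \<le> b" using cs r by (simp add: power_divide field_simps)
  hence "(\<bar>a\<bar>/r)\<^sup>2 * (1 - r\<^sup>2) + a\<^sup>2 \<le> b * (1 - r\<^sup>2) + a\<^sup>2"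
    using r by (intro add_right_mono mult_right_mono) (auto simp: power_le_one abs_square_le_1)
  hence "sqrt ((\<bar>a\<bar>/r)\<^sup>2 * (1 - r\<^sup>2) + a\<^sup>2) \<le> sqrt (b * (1 - r\<^sup>2) + a\<^sup>2)"
    by (rule real_sqrt_le_mono)
  moreover have "(\<bar>a\<bar>/r)\<^sup>2 * (1 - r\<^sup>2) + a\<^sup>2 = (\<bar>a\<bar>/r)\<^sup>2"
    using r by (simp add: power_divide field_simps)
  ultimately have s: "\<bar>a\<bar>/r \<le> sqrt (b * (1 - r\<^sup>2) + a\<^sup>2)" using r by simp
  have d: "1 - r\<^sup>2 > 0" using r by (simp add: abs_square_less_1)
  have "a / (r * (1 - r)) \<le> (\<bar>a\<bar>/r + a) / (1 - r\<^sup>2)"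
  proof (cases "a \<ge> 0")
    case True
    have f: "1 - r\<^sup>2 = (1 - r) * (1 + r)" by (simp add: power2_eq_square algebra_simps)
    have "(\<bar>a\<bar>/r + a) / (1 - r\<^sup>2) = (a * (1 + r) / r) / ((1 - r) * (1 + r))"
      using True r unfolding f by (simp add: field_simps)
    also have "\<dots> = (a * (1 + r)) / ((r * (1 - r)) * (1 + r))" by (simp add: divide_divide_eq_left mult.assoc)
    also have "\<dots> = a / (r * (1 - r))" using r by (subst mult_divide_mult_cancel_right) auto
    finally have "(\<bar>a\<bar>/r + a) / (1 - r\<^sup>2) = a / (r * (1 - r))" .
    thus ?thesis by simp
  next
    case False
    have "a / (r * (1 - r)) \<le> 0" using False r by (simp add: divide_nonpos_pos)
    moreover have "(\<bar>a\<bar>/r + a) / (1 - r\<^sup>2) \<ge> 0"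
      using False r d by (intro divide_nonneg_pos) (auto simp: field_simps)
    ultimately show ?thesis by linarith
  qed
  also have "\<dots> \<le> funk_F x y" unfolding e using s d by (simp add: divide_right_mono)
  finally show ?thesis unfolding a_def r_def .
qed

lemma F_lt1:
  fixes x y :: "'a::euclidean_space"
  assumes "norm x < 1"
  shows "funk_F x y < 1 \<longleftrightarrow> norm (x + y) < 1"
proof -
  define r2 where "r2 = (norm x)\<^sup>2"
  define a where "a = x \<bullet> y"
  define b where "b = (norm y)\<^sup>2"
  have r: "0 \<le> r2" "r2 < 1" using assms r2_def by (auto simp: abs_square_less_1)
  have cs: "a\<^sup>2 \<le> r2 * b"
    unfolding a_def r2_def b_def by (metis Cauchy_Schwarz_ineq power2_norm_eq_inner)
  have b0: "b \<ge> 0" unfolding b_def by simp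
  have e: "funk_F x y = (sqrt (b * (1 - r2) + a\<^sup>2) + a) / (1 - r2)"
    unfolding funk_F_def r2_def[symmetric] a_def[symmetric] b_def[symmetric]
    by (simp add: add_divide_distrib algebra_simps)
  have n: "(norm (x+y))\<^sup>2 = r2 + 2*a + b"
    unfolding r2_def a_def b_def by (simp add: power2_norm_eq_inner inner_add algebra_simps inner_commute)
  have q: "0 \<le> b * (1 - r2) + a\<^sup>2" using r b0 by simp
  have "funk_F x y < 1 \<longleftrightarrow> sqrt (b * (1 - r2) + a\<^sup>2) < 1 - r2 - a"
    unfolding e using r by (simp add: divide_less_eq_1 algebra_simps)
  also have "\<dots> \<longleftrightarrow> r2 + 2*a + b < 1"
  proof
    assume h: "sqrt (b * (1 - r2) + a\<^sup>2) < 1 - r2 - a"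
    hence p: "1 - r2 - a > 0" using real_sqrt_ge_zero[OF q] by linarith
    have "b * (1 - r2) + a\<^sup>2 < (1 - r2 - a)\<^sup>2"
      using h q p by (metis real_sqrt_less_iff real_sqrt_unique less_eq_real_def)
    hence "b * (1 - r2) < (1 - r2) * (1 - r2 - 2*a)" by (simp add: power2_eq_square algebra_simps)
    thus "r2 + 2*a + b < 1" using r by (simp add: mult.commute)
  next
    assume h: "r2 + 2*a + b < 1"
    have p: "1 - r2 - a > 0" using h b0 r by linarith
    have "b * (1 - r2) < (1 - r2) * (1 - r2 - 2*a)" using h r by (simp add: mult.commute)
    hence "b * (1 - r2) + a\<^sup>2 < (1 - r2 - a)\<^sup>2" by (simp add: power2_eq_square algebra_simps)
    thus "sqrt (b * (1 - r2) + a\<^sup>2) < 1 - r2 - a" using p q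
      by (metis real_sqrt_less_mono real_sqrt_abs abs_of_pos)
  qed
  also have "\<dots> \<longleftrightarrow> norm (x+y) < 1"
    using n by (metis abs_square_less_1 abs_norm_cancel)
  finally show ?thesis .
qed

lemma F_seg:
  fixes x :: "'a::euclidean_space"
  assumes "norm x < 1" "0 \<le> t" "t \<le> 1"
  shows "funk_F (t *\<^sub>R x) x = norm x / (1 - t * norm x)"
proof -
  have p: "t * norm x < 1" using assms by (smt (verit) mult_left_le_one_le norm_ge_zero)
  have "(t * norm x)\<^sup>2 < 1" using p assms by (simp add: abs_square_less_1 abs_mult)
  hence d: "1 - t\<^sup>2 * (norm x)\<^sup>2 \<noteq> 0" by (simp add: power_mult_distrib)
  have "funk_F (t *\<^sub>R x) x = (norm x + t * (norm x)\<^sup>2) / (1 - t\<^sup>2 * (norm x)\<^sup>2)"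
  proof -
    have "(norm x)\<^sup>2 - (t\<^sup>2 * (norm x)\<^sup>2 * (norm x)\<^sup>2 - (t * (norm x)\<^sup>2)\<^sup>2) = (norm x)\<^sup>2"
      by (simp add: power_mult_distrib)
    hence s: "sqrt ((norm x)\<^sup>2 - (t\<^sup>2 * (norm x)\<^sup>2 * (norm x)\<^sup>2 - (t * (norm x)\<^sup>2)\<^sup>2)) = norm x"
      by simp
    have i: "(t *\<^sub>R x) \<bullet> x = t * (norm x)\<^sup>2" by (simp add: power2_norm_eq_inner)
    show ?thesis unfolding funk_F_def i using assms s
      by (simp add: power_mult_distrib add_divide_distrib abs_mult)
  qed
  also have "\<dots> = norm x / (1 - t * norm x)"
    using d p by (simp add: field_simps power2_eq_square)
  finally show ?thesis .
qed



lemma deriv_psi: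
  fixes g :: "real \<Rightarrow> 'a::euclidean_space"
  assumes g: "(g has_vector_derivative D) (at t)" and nz: "g t \<noteq> 0" and lt: "norm (g t) < 1"
  shows "((\<lambda>t. - ln (1 - norm (g t))) has_real_derivative
            ((sgn (g t) \<bullet> D) / (1 - norm (g t)))) (at t)"
proof -
  have g': "(g has_derivative (\<lambda>s. s *\<^sub>R D)) (at t)" using g by (simp add: has_vector_derivative_def)
  have "((\<lambda>t. norm (g t)) has_derivative (\<lambda>s. sgn (g t) \<bullet> (s *\<^sub>R D))) (at t)"
    using has_derivative_compose[OF g' has_derivative_norm[OF nz]] by (simp add: o_def inner_commute)
  hence n: "((\<lambda>t. norm (g t)) has_real_derivative (sgn (g t) \<bullet> D)) (at t)"
    unfolding has_field_derivative_def by (rule has_derivative_eq_rhs) (auto simp: fun_eq_iff)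
  have "((\<lambda>t. - ln (1 - norm (g t))) has_real_derivative
            (- ((1 / (1 - norm (g t))) * (0 - sgn (g t) \<bullet> D)))) (at t)"
    by (rule derivative_eq_intros n | use lt in simp)+
  thus ?thesis by (simp add: divide_simps)
qed

definition psi :: "'a::real_normed_vector \<Rightarrow> real" where "psi x = - ln (1 - norm x)"

lemma path_core:
  fixes g :: "real \<Rightarrow> 'a::euclidean_space"
  assumes vp: "valid_path g" and im: "path_image g \<subseteq> ball 0 1"
    and int: "(\<lambda>t. funk_F (g t) (vector_derivative g (at t))) integrable_on {a..1}"
    and a: "0 \<le> a" "a \<le> 1" and nz: "\<And>t. a < t \<Longrightarrow> t \<le> 1 \<Longrightarrow> g t \<noteq> 0"
  shows "psi (g 1) - psi (g a) \<le> integral {a..1} (\<lambda>t. funk_F (g t) (vector_derivative g (at t)))"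
proof -
  define f where "f t = funk_F (g t) (vector_derivative g (at t))" for t
  obtain S where S: "finite S" "g C1_differentiable_on {0..1} - S" and cg: "continuous_on {0..1} g"
    using vp unfolding valid_path_def piecewise_C1_differentiable_on_def by blast
  obtain D where D: "\<And>t. t \<in> {0..1} - S \<Longrightarrow> (g has_vector_derivative D t) (at t)"
    using S(2) unfolding C1_differentiable_on_def by blast
  have inb: "t \<in> {0..1} \<Longrightarrow> norm (g t) < 1" for t using im unfolding path_image_def image_subset_iff by auto
  define h' where "h' t = (if t \<in> {a<..<1} - S then (sgn (g t) \<bullet> D t) / (1 - norm (g t)) else f t)" for t
  have der: "((\<lambda>t. psi (g t)) has_vector_derivative h' t) (at t)" if t: "t \<in> {a<..<1} - S" for t
  proof -
    have t01: "t \<in> {0..1} - S" using t a by auto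
    have "((\<lambda>t. psi (g t)) has_real_derivative ((sgn (g t) \<bullet> D t) / (1 - norm (g t)))) (at t)"
      unfolding psi_def using deriv_psi[OF D[OF t01] nz inb] t t01 by auto
    thus ?thesis using t by (simp add: h'_def has_real_derivative_iff_has_vector_derivative)
  qed
  have cont: "continuous_on {a..1} (\<lambda>t. psi (g t))"
  proof -
    have cg': "continuous_on {a..1} g" using a by (intro continuous_on_subset[OF cg]) auto
    have c1: "continuous_on {a..1} (\<lambda>t. 1 - norm (g t))" by (intro continuous_intros cg')
    have "continuous_on {a..1} (\<lambda>t. ln (1 - norm (g t)))"
    proof (rule continuous_on_ln[OF c1], intro ballI)
      fix t assume "t \<in> {a..1}"
      hence "norm (g t) < 1" using inb a by auto
      thus "1 - norm (g t) \<noteq> 0" by simp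
    qed
    thus ?thesis unfolding psi_def by (rule continuous_on_minus)
  qed
  have fi: "(h' has_integral (psi (g 1) - psi (g a))) {a..1}"
    by (rule fundamental_theorem_of_calculus_interior_strong[OF S(1) a(2) der cont])
  have le: "h' t \<le> f t" if "t \<in> {a..1}" for t
  proof (cases "t \<in> {a<..<1} - S")
    case True
    have t01: "t \<in> {0..1} - S" using True a by auto
    have vd: "vector_derivative g (at t) = D t" using D[OF t01] by (rule vector_derivative_at)
    have n0: "0 < norm (g t)" using nz True by auto
    have "(sgn (g t) \<bullet> D t) / (1 - norm (g t)) = (g t \<bullet> D t) / (norm (g t) * (1 - norm (g t)))"
      using n0 by (simp add: sgn_div_norm divide_simps)
    also have "\<dots> \<le> f t" unfolding f_def vd using F_radial[OF n0 inb] t01 by auto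
    finally show ?thesis using True by (simp add: h'_def)
  qed (use that in \<open>auto simp: h'_def\<close>)
  show ?thesis using has_integral_le[OF fi integrable_integral[OF int[folded f_def]] le] f_def by simp
qed



lemma F_nonneg:
  fixes x y :: "'a::euclidean_space"
  assumes "norm x < 1" shows "funk_F x y \<ge> 0"
proof -
  have cs: "(x \<bullet> y)\<^sup>2 \<le> (norm x)\<^sup>2 * (norm y)\<^sup>2"
    by (metis Cauchy_Schwarz_ineq power2_norm_eq_inner)
  have n1: "(norm x)\<^sup>2 < 1" using assms by (simp add: abs_square_less_1)
  have "sqrt ((norm y)\<^sup>2 - ((norm x)\<^sup>2 * (norm y)\<^sup>2 - (x \<bullet> y)\<^sup>2)) \<ge> sqrt ((x \<bullet> y)\<^sup>2)"
    apply (rule real_sqrt_le_mono) using n1 by (smt (verit) mult_left_le_one_le zero_le_power2)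
  hence "sqrt ((norm y)\<^sup>2 - ((norm x)\<^sup>2 * (norm y)\<^sup>2 - (x \<bullet> y)\<^sup>2)) + x \<bullet> y \<ge> 0" by simp
  thus ?thesis unfolding funk_F_def using n1 by (simp add: add_divide_distrib[symmetric])
qed

lemma psi_nonneg: "norm x < 1 \<Longrightarrow> psi x \<ge> 0"
  unfolding psi_def by (simp add: ln_le_zero_iff)

lemma F_nonneg_path:
  fixes g :: "real \<Rightarrow> 'a::euclidean_space"
  assumes im: "path_image g \<subseteq> ball 0 1" "t \<in> {0..1}"
  shows "funk_F (g t) v \<ge> 0"
  using assms by (intro F_nonneg) (auto simp: path_image_def image_subset_iff)

lemma path_lower:
  fixes g :: "real \<Rightarrow> 'a::euclidean_space"
  assumes vp: "valid_path g" and im: "path_image g \<subseteq> ball 0 1"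
    and int: "(\<lambda>t. funk_F (g t) (vector_derivative g (at t))) integrable_on {0..1}"
  shows "psi (g 1) - psi (g 0) \<le> finsler_length funk_F g"
proof -
  define f where "f t = funk_F (g t) (vector_derivative g (at t))" for t
  define Z where "Z = {t \<in> {0..1}. g t = 0}"
  have cg: "continuous_on {0..1} g" using vp valid_path_imp_path path_def by blast
  have inb: "t \<in> {0..1} \<Longrightarrow> norm (g t) < 1" for t using im unfolding path_image_def image_subset_iff by auto
  obtain a where a: "0 \<le> a" "a \<le> 1" "\<And>t. a < t \<Longrightarrow> t \<le> 1 \<Longrightarrow> g t \<noteq> 0" "psi (g a) \<le> psi (g 0)"
  proof (cases "Z = {}")
    case True
    show ?thesis by (rule that[of 0]) (use True in \<open>auto simp: Z_def\<close>)
  next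
    case False
    have cZ: "closed Z" unfolding Z_def by (rule continuous_closed_preimage_constant[OF cg]) auto
    have bZ: "bdd_above Z" unfolding Z_def by (rule bdd_aboveI[of _ 1]) auto
    have sZ: "Sup Z \<in> Z" by (rule closed_contains_Sup[OF False bZ cZ])
    show ?thesis
    proof (rule that[of "Sup Z"])
      show "0 \<le> Sup Z" "Sup Z \<le> 1" using sZ by (auto simp: Z_def)
      show "g t \<noteq> 0" if "Sup Z < t" "t \<le> 1" for t
      proof
        assume "g t = 0"
        hence "t \<in> Z" using that sZ by (auto simp: Z_def)
        hence "t \<le> Sup Z" by (rule cSup_upper[OF _ bZ])
        thus False using that by simp
      qed
      have "g (Sup Z) = 0" using sZ by (simp add: Z_def)
      thus "psi (g (Sup Z)) \<le> psi (g 0)" using psi_nonneg[OF inb[of 0]] by (simp add: psi_def)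
    qed
  qed
  have int_a: "f integrable_on {a..1}"
    using integrable_on_subinterval[OF int[folded f_def]] a by auto
  have "psi (g 1) - psi (g a) \<le> integral {a..1} f"
    unfolding f_def by (rule path_core[OF vp im int_a[unfolded f_def] a(1,2) a(3)])
  also have "\<dots> \<le> integral {0..1} f"
  proof -
    have int0: "f integrable_on {0..1}" unfolding f_def by (rule int)
    show ?thesis
      by (rule integral_subset_le[OF _ int_a int0]) (use a F_nonneg_path[OF im] in \<open>auto simp: f_def\<close>)
  qed
  finally show ?thesis using a(4) unfolding finsler_length_def f_def by simp
qed

lemma linepath_admissible:
  fixes x y :: "'a::euclidean_space"
  assumes "x \<in> ball 0 1" "y \<in> ball 0 1"
  shows "(\<lambda>t. funk_F (linepath x y t) (vector_derivative (linepath x y) (at t))) integrable_on {0..1}"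
proof -
  have seg: "t \<in> {0..1} \<Longrightarrow> norm (linepath x y t) < 1" for t
    using assms convex_ball[of "0::'a" 1] unfolding linepath_def
    by (metis convex_alt atLeastAtMost_iff mem_ball_0)
  have d: "t \<in> {0..1} \<Longrightarrow> 1 - (norm (linepath x y t))\<^sup>2 \<noteq> 0" for t
    using seg[of t] by (metis abs_square_less_1 abs_norm_cancel less_irrefl right_minus_eq)
  have "continuous_on {0..1} (\<lambda>t. funk_F (linepath x y t) (y - x))"
    unfolding funk_F_def using d
    by (intro continuous_intros continuous_on_linepath) auto
  thus ?thesis by (intro integrable_continuous_interval) simp
qed

lemma finsler_dist_lower:
  fixes x y :: "'a::euclidean_space"
  assumes "x \<in> ball 0 1" "y \<in> ball 0 1"
  shows "psi y - psi x \<le> finsler_dist funk_F (ball 0 1) x y" "0 \<le> finsler_dist funk_F (ball 0 1) x y"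
proof -
  let ?A = "{finsler_length funk_F g | g. valid_path g \<and> path_image g \<subseteq> ball 0 1 \<and>
       pathstart g = x \<and> pathfinish g = y \<and>
       (\<lambda>t. funk_F (g t) (vector_derivative g (at t))) integrable_on {0..1}}"
  have ne: "?A \<noteq> {}"
  proof -
    have "path_image (linepath x y) \<subseteq> ball 0 1"
      using assms by (simp add: closed_segment_subset convex_ball)
    hence "valid_path (linepath x y) \<and> path_image (linepath x y) \<subseteq> ball 0 1 \<and>
       pathstart (linepath x y) = x \<and> pathfinish (linepath x y) = y \<and>
       (\<lambda>t. funk_F (linepath x y t) (vector_derivative (linepath x y) (at t))) integrable_on {0..1}"
      using linepath_admissible[OF assms] by simp
    thus ?thesis by blast
  qed
  show "psi y - psi x \<le> finsler_dist funk_F (ball 0 1) x y"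
    unfolding finsler_dist_def
    by (rule cInf_greatest[OF ne]) (auto dest!: path_lower simp: pathstart_def pathfinish_def)
  show "0 \<le> finsler_dist funk_F (ball 0 1) x y"
    unfolding finsler_dist_def
    by (rule cInf_greatest[OF ne]) (auto simp: finsler_length_def intro!: integral_nonneg F_nonneg_path)
qed

lemma finsler_dist_0:
  fixes x :: "'a::euclidean_space"
  assumes x: "x \<in> ball 0 1"
  shows "finsler_dist funk_F (ball 0 1) 0 x = psi x"
proof -
  let ?A = "{finsler_length funk_F g | g. valid_path g \<and> path_image g \<subseteq> ball 0 1 \<and>
       pathstart g = 0 \<and> pathfinish g = x \<and>
       (\<lambda>t. funk_F (g t) (vector_derivative g (at t))) integrable_on {0..1}}"
  have z: "(0::'a) \<in> ball 0 1" by simp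
  have nx: "norm x < 1" using x by simp
  have lx: "linepath 0 x t = t *\<^sub>R x" for t by (simp add: linepath_def)
  have len: "finsler_length funk_F (linepath 0 x) = psi x"
  proof -
    have F: "funk_F (linepath 0 x t) (vector_derivative (linepath 0 x) (at t)) = norm x / (1 - t * norm x)"
      if "t \<in> {0..1}" for t using F_seg[OF nx] that by (simp add: lx)
    have p: "t \<in> {0..1} \<Longrightarrow> t * norm x < 1" for t
      using nx by (smt (verit) atLeastAtMost_iff mult_left_le_one_le norm_ge_zero)
    have "((\<lambda>t. norm x / (1 - t * norm x)) has_integral ((- ln (1 - 1 * norm x)) - (- ln (1 - 0 * norm x)))) {0..1}"
    proof (rule fundamental_theorem_of_calculus)
      fix t :: real assume t: "t \<in> {0..1}"
      have "((\<lambda>t. - ln (1 - t * norm x)) has_real_derivative (- ((1 / (1 - t * norm x)) * (0 - 1 * norm x)))) (at t within {0..1})"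
        by (rule derivative_eq_intros refl | use p[OF t] in simp)+
      thus "((\<lambda>t. - ln (1 - t * norm x)) has_vector_derivative norm x / (1 - t * norm x)) (at t within {0..1})"
        by (simp add: has_real_derivative_iff_has_vector_derivative[symmetric])
    qed simp
    hence "((\<lambda>t. funk_F (linepath 0 x t) (vector_derivative (linepath 0 x) (at t))) has_integral psi x) {0..1}"
      using F by (subst has_integral_cong) (auto simp: psi_def)
    thus ?thesis unfolding finsler_length_def by (simp add: integral_unique)
  qed
  have mem: "psi x \<in> ?A"
  proof -
    have "path_image (linepath 0 x) \<subseteq> ball 0 1"
      using x by (simp add: closed_segment_subset convex_ball)
    hence "valid_path (linepath 0 x) \<and> path_image (linepath 0 x) \<subseteq> ball 0 1 \<and>
       pathstart (linepath 0 x) = 0 \<and> pathfinish (linepath 0 x) = x \<and>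
       (\<lambda>t. funk_F (linepath 0 x t) (vector_derivative (linepath 0 x) (at t))) integrable_on {0..1}"
      using linepath_admissible[OF z x] by simp
    thus ?thesis using len[symmetric] by blast
  qed
  have "finsler_dist funk_F (ball 0 1) 0 x \<le> psi x"
    unfolding finsler_dist_def
  proof (rule cInf_lower[OF mem])
    show "bdd_below ?A"
      by (rule bdd_belowI[of _ 0]) (auto simp: finsler_length_def intro!: integral_nonneg F_nonneg_path)
  qed
  moreover have "psi x - psi (0::'a) \<le> finsler_dist funk_F (ball 0 1) 0 x"
    using finsler_dist_lower(1)[OF z x] by simp
  ultimately show ?thesis by (simp add: psi_def)
qed



lemma bh_eq:
  "busemann_hausdorff funk_F (ball (0::'a::euclidean_space) 1) = density lborel (indicator (ball 0 1))"
proof -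
  have "(\<lambda>x. indicator (ball (0::'a) 1) x * (emeasure lborel (ball (0::'a) 1) / emeasure lborel {y. funk_F x y < 1}))
        = indicator (ball 0 1)"
  proof
    fix x :: 'a
    show "indicator (ball (0::'a) 1) x * (emeasure lborel (ball (0::'a) 1) / emeasure lborel {y. funk_F x y < 1})
          = indicator (ball 0 1) x"
    proof (cases "x \<in> ball 0 1")
      case True
      have nm: "norm (- x - y) = norm (x + y)" for y :: 'a
      proof -
        have "- x - y = - (x + y)" by simp
        thus ?thesis by (simp only: norm_minus_cancel)
      qed
      have "{y. funk_F x y < 1} = ball (-x) 1"
      proof (rule set_eqI)
        fix y
        have "funk_F x y < 1 \<longleftrightarrow> norm (x + y) < 1" using F_lt1[of x y] True by simp
        also have "\<dots> \<longleftrightarrow> y \<in> ball (-x) 1" by (simp only: mem_ball dist_norm nm)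
        finally show "y \<in> {y. funk_F x y < 1} \<longleftrightarrow> y \<in> ball (-x) 1" by simp
      qed
      hence "emeasure lborel {y. funk_F x y < 1} = emeasure lborel (ball (0::'a) 1)"
        by (simp add: emeasure_ball)
      moreover have "emeasure lborel (ball (0::'a) 1) / emeasure lborel (ball (0::'a) 1) = 1"
      proof -
        have V: "Ball_Volume.unit_ball_vol (real DIM('a)) > 0" by (rule Ball_Volume.unit_ball_vol_pos) simp
        have e: "emeasure lborel (ball (0::'a) 1) = ennreal (Ball_Volume.unit_ball_vol (real DIM('a)))"
          by (simp add: emeasure_ball)
        have V': "Ball_Volume.unit_ball_vol (real DIM('a)) \<noteq> 0" using V by linarith
        show ?thesis unfolding e using V V' by (simp add: divide_ennreal)
      qed
      ultimately show ?thesis using True by simp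
    qed simp
  qed
  thus ?thesis unfolding busemann_hausdorff_def by simp
qed

lemma bh_emeasure:
  fixes A :: "'a::euclidean_space set"
  assumes "A \<in> sets lborel" "A \<subseteq> ball 0 1"
  shows "emeasure (busemann_hausdorff funk_F (ball (0::'a) 1)) A = emeasure lborel A"
proof -
  have "emeasure (density lborel (indicator (ball (0::'a) 1))) A = (\<integral>\<^sup>+x. indicator (ball 0 1) x * indicator A x \<partial>lborel)"
    using assms by (subst emeasure_density) (auto intro!: borel_measurable_indicator)
  also have "\<dots> = (\<integral>\<^sup>+x. indicator A x \<partial>lborel)"
    using assms by (intro nn_integral_cong) (auto simp: indicator_def)
  also have "\<dots> = emeasure lborel A" using assms by simp
  finally show ?thesis by (simp add: bh_eq)
qed

lemma fball_eq:
  "fball (finsler_dist funk_F (ball (0::'a::euclidean_space) 1)) (ball 0 1) 0 \<rho> = ball 0 (1 - exp (- \<rho>))"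
proof -
  have "y \<in> ball 0 1 \<and> psi y < \<rho> \<longleftrightarrow> norm y < 1 - exp (- \<rho>)" for y :: 'a
  proof
    assume h: "y \<in> ball 0 1 \<and> psi y < \<rho>"
    hence p: "0 < 1 - norm y" by simp
    have "- \<rho> < ln (1 - norm y)" using h by (simp add: psi_def)
    hence "exp (- \<rho>) < exp (ln (1 - norm y))" by simp
    thus "norm y < 1 - exp (- \<rho>)" using p by simp
  next
    assume h: "norm y < 1 - exp (- \<rho>)"
    hence y1: "norm y < 1" by (smt (verit) exp_gt_zero)
    have p: "0 < 1 - norm y" using y1 by simp
    have "exp (- \<rho>) < 1 - norm y" using h by simp
    hence "ln (exp (- \<rho>)) < ln (1 - norm y)" using p by (subst ln_less_cancel_iff) auto
    thus "y \<in> ball 0 1 \<and> psi y < \<rho>" using y1 by (simp add: psi_def)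
  qed
  moreover have "y \<in> ball 0 1 \<and> finsler_dist funk_F (ball (0::'a) 1) 0 y < \<rho> \<longleftrightarrow> y \<in> ball 0 1 \<and> psi y < \<rho>" for y :: 'a
    using finsler_dist_0[of y] by auto
  ultimately show ?thesis unfolding fball_def by auto
qed

lemma ball_max: "ball (0::'a::real_normed_vector) (max 0 c) = ball 0 c"
  apply (cases "0 \<le> c")
   apply (auto simp: max_def)
  by (smt (verit) norm_ge_zero)

lemma ubv: "unit_ball_vol TYPE('a::euclidean_space) = Ball_Volume.unit_ball_vol (real DIM('a))"
  unfolding unit_ball_vol_def by (simp add: content_ball)

lemma annulus_measure:
  fixes \<rho> \<delta> :: real
  assumes "0 < \<delta>"
  shows "enn2ereal (emeasure (busemann_hausdorff funk_F (ball (0::'a::euclidean_space) 1))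
            (fball (finsler_dist funk_F (ball (0::'a) 1)) (ball 0 1) 0 (\<rho> + \<delta>)
             - fball (finsler_dist funk_F (ball (0::'a) 1)) (ball 0 1) 0 \<rho>))
         = ereal (unit_ball_vol TYPE('a) * (max 0 (1 - exp (- (\<rho> + \<delta>))) ^ DIM('a) - max 0 (1 - exp (- \<rho>)) ^ DIM('a)))"
proof -
  let ?V = "Ball_Volume.unit_ball_vol (real DIM('a))"
  define r1 where "r1 = max 0 (1 - exp (- \<rho>))"
  define r2 where "r2 = max 0 (1 - exp (- (\<rho> + \<delta>)))"
  have b1: "ball (0::'a) (1 - exp (- \<rho>)) = ball 0 r1" unfolding r1_def by (rule ball_max[symmetric])
  have b2: "ball (0::'a) (1 - exp (- (\<rho>+\<delta>))) = ball 0 r2" unfolding r2_def by (rule ball_max[symmetric])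
  have r12: "r1 \<le> r2" unfolding r1_def r2_def using assms by (auto simp: max_def)
  have r2l: "r2 < 1" unfolding r2_def by auto
  have sub: "ball (0::'a) r2 - ball 0 r1 \<subseteq> ball 0 1" using r2l by auto
  have "emeasure (busemann_hausdorff funk_F (ball (0::'a) 1)) (ball 0 r2 - ball 0 r1)
        = emeasure lborel (ball (0::'a) r2 - ball 0 r1)"
    by (rule bh_emeasure[OF _ sub]) auto
  also have "\<dots> = emeasure lborel (ball (0::'a) r2) - emeasure lborel (ball (0::'a) r1)"
    using r12 by (intro emeasure_Diff) (auto simp: emeasure_ball r1_def r2_def)
  also have "\<dots> = ennreal (?V * r2 ^ DIM('a) - ?V * r1 ^ DIM('a))"
    using r12 by (simp add: emeasure_ball r1_def r2_def ennreal_minus)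
  finally have e: "emeasure (busemann_hausdorff funk_F (ball (0::'a) 1)) (ball 0 r2 - ball 0 r1)
       = ennreal (?V * r2 ^ DIM('a) - ?V * r1 ^ DIM('a))" .
  have nn: "0 \<le> ?V * r2 ^ DIM('a) - ?V * r1 ^ DIM('a)"
    using r12 by (simp add: r1_def power_mono)
  have eqv: "unit_ball_vol TYPE('a) * (max 0 (1 - exp (- (\<rho> + \<delta>))) ^ DIM('a) - max 0 (1 - exp (- \<rho>)) ^ DIM('a))
     = ?V * r2 ^ DIM('a) - ?V * r1 ^ DIM('a)"
    unfolding ubv r1_def r2_def by (rule right_diff_distrib)
  show ?thesis unfolding fball_eq b1 b2 e eqv using nn by simp
qed




lemma area_formula:
  fixes \<rho> :: real
  assumes r: "0 < \<rho>"
  shows "area_fn (busemann_hausdorff funk_F (ball (0::'a::euclidean_space) 1))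
                    (finsler_dist funk_F (ball 0 1)) (ball 0 1) 0 \<rho>
              = ereal (real DIM('a) * unit_ball_vol TYPE('a) * (1 - exp (- \<rho>)) ^ (DIM('a) - 1)
                       * exp (- \<rho>))"
proof -
  let ?n = "DIM('a)"
  let ?w = "unit_ball_vol TYPE('a)"
  define G where "G x = ?w * (1 - exp (- x)) ^ ?n" for x
  have ev: "eventually (\<lambda>\<delta>. enn2ereal (emeasure (busemann_hausdorff funk_F (ball (0::'a) 1))
            (fball (finsler_dist funk_F (ball (0::'a) 1)) (ball 0 1) 0 (\<rho> + \<delta>)
             - fball (finsler_dist funk_F (ball (0::'a) 1)) (ball 0 1) 0 \<rho>)) / ereal \<delta>
         = ereal ((G (\<rho> + \<delta>) - G \<rho>) / \<delta>)) (at_right 0)"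
  proof -
    have "eventually (\<lambda>\<delta>::real. 0 < \<delta>) (at_right 0)" by (simp add: eventually_at_right_less)
    thus ?thesis
    proof (rule eventually_mono)
      fix \<delta> :: real assume d: "0 < \<delta>"
      have m1: "max 0 (1 - exp (- \<rho>)) = 1 - exp (- \<rho>)" using r by simp
      have m2: "max 0 (1 - exp (- (\<rho> + \<delta>))) = 1 - exp (- (\<rho> + \<delta>))" using r d by simp
      show "enn2ereal (emeasure (busemann_hausdorff funk_F (ball (0::'a) 1))
            (fball (finsler_dist funk_F (ball (0::'a) 1)) (ball 0 1) 0 (\<rho> + \<delta>)
             - fball (finsler_dist funk_F (ball (0::'a) 1)) (ball 0 1) 0 \<rho>)) / ereal \<delta>
         = ereal ((G (\<rho> + \<delta>) - G \<rho>) / \<delta>)"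
        unfolding annulus_measure[OF d] m1 m2 using d by (simp add: G_def algebra_simps)
    qed
  qed
  have der: "(G has_real_derivative (real ?n * ?w * (1 - exp (- \<rho>)) ^ (?n - 1) * exp (- \<rho>))) (at \<rho>)"
    unfolding G_def
    by (auto intro!: derivative_eq_intros)
  have "((\<lambda>\<delta>. (G (\<rho> + \<delta>) - G \<rho>) / \<delta>) \<longlongrightarrow> real ?n * ?w * (1 - exp (- \<rho>)) ^ (?n - 1) * exp (- \<rho>)) (at_right 0)"
    using DERIV_D[OF der] by (rule filterlim_mono) (auto simp: at_within_le_at)
  hence "((\<lambda>\<delta>. ereal ((G (\<rho> + \<delta>) - G \<rho>) / \<delta>)) \<longlongrightarrow> ereal (real ?n * ?w * (1 - exp (- \<rho>)) ^ (?n - 1) * exp (- \<rho>))) (at_right 0)"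
    by simp
  hence "Limsup (at_right 0) (\<lambda>\<delta>. ereal ((G (\<rho> + \<delta>) - G \<rho>) / \<delta>)) = ereal (real ?n * ?w * (1 - exp (- \<rho>)) ^ (?n - 1) * exp (- \<rho>))"
    by (intro lim_imp_Limsup) simp_all
  thus ?thesis unfolding area_fn_def using Limsup_eq[OF ev] by simp
qed



lemma sinh_le: assumes "0 \<le> y" shows "sinh y \<le> y * cosh (y::real)"
proof -
  have "(\<lambda>t. t * cosh t - sinh t) 0 \<le> (\<lambda>t. t * cosh t - sinh t) y"
  proof (rule DERIV_nonneg_imp_nondecreasing[OF assms])
    fix x :: real assume x: "0 \<le> x" "x \<le> y"
    have "((\<lambda>t. t * cosh t - sinh t) has_real_derivative (x * sinh x)) (at x)"
      by (auto intro!: derivative_eq_intros)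
    moreover have "x * sinh x \<ge> 0" using x by simp
    ultimately show "\<exists>d. ((\<lambda>t. t * cosh t - sinh t) has_real_derivative d) (at x) \<and> 0 \<le> d" by blast
  qed
  thus ?thesis by simp
qed

lemma q_decr:
  fixes \<kappa> a b :: real
  assumes k: "0 < \<kappa>" and ab: "0 < a" "a \<le> b"
  shows "(1 - exp (- b)) / sinh (\<kappa> * b) \<le> (1 - exp (- a)) / sinh (\<kappa> * a)"
proof (rule DERIV_nonpos_imp_nonincreasing[OF ab(2)])
  fix x :: real assume x: "a \<le> x" "x \<le> b"
  have x0: "0 < x" using x ab by simp
  have s: "sinh (\<kappa> * x) > 0" using k x0 by simp
  define D where "D = (exp (- x) * sinh (\<kappa> * x) - (1 - exp (- x)) * (cosh (\<kappa> * x) * \<kappa>)) / (sinh (\<kappa> * x))\<^sup>2"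
  have "((\<lambda>t. (1 - exp (- t)) / sinh (\<kappa> * t)) has_real_derivative D) (at x)"
    unfolding D_def using s
    by (auto intro!: derivative_eq_intros simp: power2_eq_square algebra_simps)
  moreover have "D \<le> 0"
  proof -
    have e1: "x * exp (- x) \<le> 1 - exp (- x)"
    proof -
      have "1 + x \<le> exp x" by simp
      hence "(1 + x) * exp (- x) \<le> exp x * exp (- x)" by (intro mult_right_mono) auto
      thus ?thesis by (simp add: exp_minus_inverse algebra_simps)
    qed
    have "exp (- x) * sinh (\<kappa> * x) \<le> exp (- x) * ((\<kappa> * x) * cosh (\<kappa> * x))"
      using sinh_le[of "\<kappa> * x"] k x0 by (intro mult_left_mono) auto
    also have "\<dots> = (x * exp (- x)) * (cosh (\<kappa> * x) * \<kappa>)" by (simp add: algebra_simps)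
    also have "\<dots> \<le> (1 - exp (- x)) * (cosh (\<kappa> * x) * \<kappa>)"
      using e1 k by (intro mult_right_mono) auto
    finally show ?thesis unfolding D_def by (simp add: divide_nonpos_nonneg)
  qed
  ultimately show "\<exists>y. ((\<lambda>t. (1 - exp (- t)) / sinh (\<kappa> * t)) has_real_derivative y) (at x) \<and> y \<le> 0"
    by blast
qed

lemma lim_q: "((\<lambda>\<rho>::real. (1 - exp (- \<rho>)) / \<rho>) \<longlongrightarrow> 1) (at_right 0)"
proof -
  have d: "((\<lambda>x::real. 1 - exp (- x)) has_real_derivative 1) (at 0)"
    by (auto intro!: derivative_eq_intros)
  have "((\<lambda>h. ((1 - exp (- (0 + h))) - (1 - exp (- 0))) / h) \<longlongrightarrow> 1) (at (0::real))"
    by (rule DERIV_D[OF d])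
  hence "((\<lambda>h::real. (1 - exp (- h)) / h) \<longlongrightarrow> 1) (at 0)" by simp
  thus ?thesis by (rule filterlim_mono) (auto simp: at_within_le_at)
qed



lemma omega_pos: "unit_ball_vol TYPE('a::euclidean_space) > 0"
  unfolding ubv by (rule Ball_Volume.unit_ball_vol_pos) simp

lemma lim_D: "((\<lambda>\<rho>::real. ((1 - exp (- \<rho>)) / \<rho>) ^ m * exp (- \<rho>)) \<longlongrightarrow> 1) (at_right 0)"
proof -
  have e: "((\<lambda>\<rho>::real. exp (- \<rho>)) \<longlongrightarrow> exp (- 0)) (at_right 0)"
    by (intro tendsto_intros)
  show ?thesis using tendsto_mult[OF tendsto_power[OF lim_q, of m] e] by simp
qed

lemma part_D:
  "hyp_D DIM('a) (unit_ball_vol TYPE('a)) (busemann_hausdorff funk_F (ball (0::'a::euclidean_space) 1))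
           (finsler_dist funk_F (ball 0 1)) (ball 0 1) 0"
proof -
  let ?n = "DIM('a)"
  let ?w = "unit_ball_vol TYPE('a)"
  have w: "?w > 0" by (rule omega_pos)
  have n: "real ?n > 0" by simp
  have ev: "eventually (\<lambda>\<rho>. area_fn (busemann_hausdorff funk_F (ball (0::'a) 1))
           (finsler_dist funk_F (ball 0 1)) (ball 0 1) 0 \<rho> / ereal (real ?n * ?w * \<rho> ^ (?n - 1))
        = ereal (((1 - exp (- \<rho>)) / \<rho>) ^ (?n - 1) * exp (- \<rho>))) (at_right 0)"
  proof -
    have "eventually (\<lambda>\<rho>::real. 0 < \<rho>) (at_right 0)" by (simp add: eventually_at_right_less)
    thus ?thesis
    proof (rule eventually_mono)
      fix \<rho> :: real assume r: "0 < \<rho>"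
      have nz: "real ?n * ?w * \<rho> ^ (?n - 1) \<noteq> 0" using w n r by simp
      have "real ?n * ?w * (1 - exp (- \<rho>)) ^ (?n - 1) * exp (- \<rho>) / (real ?n * ?w * \<rho> ^ (?n - 1))
            = ((1 - exp (- \<rho>)) / \<rho>) ^ (?n - 1) * exp (- \<rho>)"
        using w n r by (simp add: power_divide field_simps)
      thus "area_fn (busemann_hausdorff funk_F (ball (0::'a) 1))
           (finsler_dist funk_F (ball 0 1)) (ball 0 1) 0 \<rho> / ereal (real ?n * ?w * \<rho> ^ (?n - 1))
        = ereal (((1 - exp (- \<rho>)) / \<rho>) ^ (?n - 1) * exp (- \<rho>))"
        unfolding area_formula[OF r] using nz by simp
    qed
  qed
  have e: "((\<lambda>\<rho>::real. exp (- \<rho>)) \<longlongrightarrow> exp (- 0)) (at_right 0)"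
    by (intro tendsto_intros)
  have "((\<lambda>\<rho>::real. ((1 - exp (- \<rho>)) / \<rho>) ^ (?n - 1) * exp (- \<rho>)) \<longlongrightarrow> 1) (at_right 0)"
    using lim_D[of "DIM('a) - 1"] by simp
  hence "((\<lambda>\<rho>. ereal (((1 - exp (- \<rho>)) / \<rho>) ^ (?n - 1) * exp (- \<rho>))) \<longlongrightarrow> ereal 1) (at_right 0)"
    by (simp only: lim_ereal)
  hence "Liminf (at_right 0) (\<lambda>\<rho>. ereal (((1 - exp (- \<rho>)) / \<rho>) ^ (?n - 1) * exp (- \<rho>))) = ereal 1"
    by (intro lim_imp_Liminf) simp_all
  thus ?thesis unfolding hyp_D_def using Liminf_eq[OF ev] by simp
qed

lemma part_BG:
  assumes k: "0 < \<kappa>"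
  shows "hyp_BG DIM('a) \<kappa> (busemann_hausdorff funk_F (ball (0::'a::euclidean_space) 1))
           (finsler_dist funk_F (ball 0 1)) (ball 0 1) 0"
  unfolding hyp_BG_def
proof (intro allI impI)
  fix \<rho>1 \<rho>2 :: real assume r: "0 < \<rho>1 \<and> \<rho>1 \<le> \<rho>2"
  let ?n = "DIM('a)"
  let ?w = "unit_ball_vol TYPE('a)"
  have w: "?w > 0" by (rule omega_pos)
  define q where "q x = (1 - exp (- x)) / sinh (\<kappa> * x)" for x
  have val: "area_fn (busemann_hausdorff funk_F (ball (0::'a) 1))
           (finsler_dist funk_F (ball 0 1)) (ball 0 1) 0 x / ereal (sinh (\<kappa> * x) ^ (?n - 1))
        = ereal (real ?n * ?w * q x ^ (?n - 1) * exp (- x))" if x: "0 < x" for x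
  proof -
    have s: "sinh (\<kappa> * x) > 0" using k x by simp
    have eq: "real ?n * ?w * (1 - exp (- x)) ^ (?n - 1) * exp (- x) / sinh (\<kappa> * x) ^ (?n - 1)
          = real ?n * ?w * q x ^ (?n - 1) * exp (- x)"
      unfolding q_def using s by (simp add: power_divide field_simps)
    have nz: "sinh (\<kappa> * x) ^ (?n - 1) \<noteq> 0" using s k x by auto
    have "area_fn (busemann_hausdorff funk_F (ball (0::'a) 1))
           (finsler_dist funk_F (ball 0 1)) (ball 0 1) 0 x / ereal (sinh (\<kappa> * x) ^ (?n - 1))
         = ereal (real ?n * ?w * (1 - exp (- x)) ^ (?n - 1) * exp (- x)) / ereal (sinh (\<kappa> * x) ^ (?n - 1))"
      by (simp only: area_formula[OF x])
    also have "\<dots> = ereal (real ?n * ?w * (1 - exp (- x)) ^ (?n - 1) * exp (- x) / sinh (\<kappa> * x) ^ (?n - 1))"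
      using nz by (simp only: ereal_divide if_False)
    finally show ?thesis unfolding eq .
  qed
  have r2: "0 < \<rho>2" using r by linarith
  have q2: "0 \<le> q \<rho>2" unfolding q_def using r2 k by (intro divide_nonneg_pos) auto
  have qq: "q \<rho>2 \<le> q \<rho>1" unfolding q_def using q_decr[OF k] r by blast
  have "q \<rho>2 ^ (?n - 1) * exp (- \<rho>2) \<le> q \<rho>1 ^ (?n - 1) * exp (- \<rho>1)"
    using r q2 qq by (intro mult_mono power_mono) auto
  hence "real ?n * ?w * q \<rho>2 ^ (?n - 1) * exp (- \<rho>2) \<le> real ?n * ?w * q \<rho>1 ^ (?n - 1) * exp (- \<rho>1)"
    using w by (simp add: mult.assoc mult_left_mono)
  thus "area_fn (busemann_hausdorff funk_F (ball (0::'a) 1))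
           (finsler_dist funk_F (ball 0 1)) (ball 0 1) 0 \<rho>2 / ereal (sinh (\<kappa> * \<rho>2) ^ (?n - 1))
        \<le> area_fn (busemann_hausdorff funk_F (ball (0::'a) 1))
           (finsler_dist funk_F (ball 0 1)) (ball 0 1) 0 \<rho>1 / ereal (sinh (\<kappa> * \<rho>1) ^ (?n - 1))"
    unfolding val[OF r2] val[OF conjunct1[OF r]] by simp
qed



definition hS :: "real \<Rightarrow> real \<Rightarrow> real" where
  "hS S t = max 0 (min 1 (2 - t / S))"

definition uS :: "real \<Rightarrow> 'a::euclidean_space \<Rightarrow> real" where
  "uS S x = - hS S (- ln (1 - min (norm x) (1 - exp (- (2 * S)))))"

lemma hS_anti: "0 < S \<Longrightarrow> a \<le> b \<Longrightarrow> hS S b \<le> hS S a"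
  unfolding hS_def by (intro max.mono min.mono) (auto simp: divide_right_mono)

lemma hS_lip: "0 < S \<Longrightarrow> \<bar>hS S a - hS S b\<bar> \<le> \<bar>a - b\<bar> / S"
proof -
  assume S: "0 < S"
  have "(2 - a / S) - (2 - b / S) = (b - a) / S" by (simp add: diff_divide_distrib)
  hence "\<bar>(2 - a / S) - (2 - b / S)\<bar> = \<bar>a - b\<bar> / S" using S by (simp add: abs_divide abs_minus_commute)
  moreover have "\<bar>max 0 (min 1 p) - max 0 (min 1 q)\<bar> \<le> \<bar>p - q\<bar>" for p q :: real
    by (simp add: max_def min_def abs_if)
  ultimately show ?thesis unfolding hS_def by metis
qed

lemma hS_small: "0 < S \<Longrightarrow> t \<le> S \<Longrightarrow> hS S t = 1"
  unfolding hS_def by (simp add: divide_le_eq_1 max_def min_def)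

lemma hS_big: "0 < S \<Longrightarrow> 2 * S \<le> t \<Longrightarrow> hS S t = 0"
proof -
  assume S: "0 < S" and t: "2 * S \<le> t"
  have "2 \<le> t / S" using S t by (simp add: le_divide_eq)
  thus ?thesis unfolding hS_def by (simp add: max_def min_def)
qed

lemma uS_psi:
  fixes x :: "'a::euclidean_space"
  assumes S: "0 < S" and x: "norm x < 1"
  shows "uS S x = - hS S (psi x)"
proof (cases "norm x \<le> 1 - exp (- (2 * S))")
  case True
  thus ?thesis unfolding uS_def psi_def by simp
next
  case False
  have l: "- ln (1 - (1 - exp (- (2 * S)))) = 2 * S" by simp
  have p: "0 < 1 - norm x" using x by simp
  have "exp (- (2 * S)) > 1 - norm x" using False by simp
  hence "ln (1 - norm x) < ln (exp (- (2 * S)))" using p by (subst ln_less_cancel_iff) auto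
  hence "2 * S \<le> psi x" unfolding psi_def by simp
  thus ?thesis unfolding uS_def using False l hS_big[OF S] by (simp add: min_def)
qed

lemma uS_zero:
  fixes x :: "'a::euclidean_space"
  assumes S: "0 < S" and x: "1 - exp (- (2 * S)) \<le> norm x"
  shows "uS S x = 0"
proof -
  have "min (norm x) (1 - exp (- (2 * S))) = 1 - exp (- (2 * S))" using x by simp
  thus ?thesis unfolding uS_def using hS_big[OF S] by simp
qed

lemma uS_lip:
  fixes x y :: "'a::euclidean_space"
  assumes S: "0 < S"
  shows "\<bar>uS S x - uS S y\<bar> \<le> (exp (2 * S) / S) * dist x y"
proof -
  define R where "R = 1 - exp (- (2 * S))"
  define mx where "mx = min (norm x) R"
  define my where "my = min (norm y) R"
  have R: "0 \<le> R" "R < 1" unfolding R_def using S by auto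
  have q: "1 - R = exp (- (2 * S))" unfolding R_def by simp
  have mxb: "0 \<le> mx" "mx \<le> R" "0 \<le> my" "my \<le> R" unfolding mx_def my_def using R by auto
  have lnb: "ln (1 - p) - ln (1 - q) \<le> \<bar>p - q\<bar> * exp (2 * S)" if pq: "0 \<le> p" "p \<le> R" "0 \<le> q" "q \<le> R" for p q
  proof -
    have pp: "0 < 1 - p" "0 < 1 - q" using pq R by auto
    have "ln (1 - p) - ln (1 - q) = ln ((1 - p) / (1 - q))" using pp by (simp add: ln_div)
    also have "\<dots> \<le> (1 - p) / (1 - q) - 1" using pp by (intro ln_le_minus_one) simp
    also have "\<dots> = (q - p) / (1 - q)" using pp by (simp add: field_simps)
    also have "\<dots> \<le> \<bar>p - q\<bar> / (1 - R)"
    proof -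
      have "(q - p) / (1 - q) \<le> \<bar>p - q\<bar> / (1 - q)" using pp by (intro divide_right_mono) auto
      also have "\<dots> \<le> \<bar>p - q\<bar> / (1 - R)" using pp pq R by (intro divide_left_mono) auto
      finally show ?thesis .
    qed
    also have "\<dots> = \<bar>p - q\<bar> * exp (2 * S)" unfolding q by (simp add: exp_minus divide_inverse)
    finally show ?thesis .
  qed
  have "\<bar>ln (1 - mx) - ln (1 - my)\<bar> \<le> \<bar>mx - my\<bar> * exp (2 * S)"
    using lnb[of mx my] lnb[of my mx] mxb by (simp add: abs_le_iff abs_minus_commute)
  also have "\<dots> \<le> dist x y * exp (2 * S)"
  proof -
    have "\<bar>mx - my\<bar> \<le> \<bar>norm x - norm y\<bar>" unfolding mx_def my_def by (simp add: min_def abs_if)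
    also have "\<dots> \<le> dist x y" by (simp add: dist_norm norm_triangle_ineq3)
    finally show ?thesis by (simp add: mult_right_mono)
  qed
  finally have l: "\<bar>(- ln (1 - mx)) - (- ln (1 - my))\<bar> \<le> dist x y * exp (2 * S)" by simp
  have "\<bar>uS S x - uS S y\<bar> = \<bar>hS S (- ln (1 - mx)) - hS S (- ln (1 - my))\<bar>"
    unfolding uS_def mx_def my_def R_def by (simp add: abs_minus_commute)
  also have "\<dots> \<le> \<bar>(- ln (1 - mx)) - (- ln (1 - my))\<bar> / S" by (rule hS_lip[OF S])
  also have "\<dots> \<le> (dist x y * exp (2 * S)) / S" using l S by (simp add: divide_right_mono)
  finally show ?thesis by (simp add: field_simps)
qed

lemma ratio_upper:
  fixes x y :: "'a::euclidean_space"
  assumes S: "0 < S" and x: "x \<in> ball 0 1" and y: "y \<in> ball 0 1"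
  shows "(uS S y - uS S x) / finsler_dist funk_F (ball 0 1) x y \<le> 1 / S"
proof -
  let ?d = "finsler_dist funk_F (ball 0 1) x y"
  have d0: "0 \<le> ?d" and dl: "psi y - psi x \<le> ?d" using finsler_dist_lower[OF x y] by auto
  have e: "uS S y - uS S x = hS S (psi x) - hS S (psi y)" using uS_psi[OF S, of x] uS_psi[OF S, of y] x y by simp
  show ?thesis
  proof (cases "psi y \<le> psi x")
    case True
    have "uS S y - uS S x \<le> 0" unfolding e using hS_anti[OF S True] by simp
    hence "(uS S y - uS S x) / ?d \<le> 0" using d0 by (simp add: divide_nonpos_nonneg)
    also have "0 \<le> 1 / S" using S by simp
    finally show ?thesis .
  next
    case False
    have dp: "0 < ?d" using False dl by linarith
    have "uS S y - uS S x \<le> \<bar>psi x - psi y\<bar> / S" unfolding e using hS_lip[OF S] abs_le_iff by blast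
    also have "\<dots> \<le> ?d / S" using False dl S by (simp add: divide_right_mono)
    finally show ?thesis using dp S by (simp add: divide_le_eq field_simps)
  qed
qed

lemma Limsup_ge0:
  fixes f :: "'a::metric_space \<Rightarrow> ereal"
  assumes "\<And>d. 0 < d \<Longrightarrow> \<exists>y\<in>A. y \<noteq> x \<and> dist y x < d \<and> 0 \<le> f y"
  shows "0 \<le> Limsup (at x within A) f"
  unfolding Limsup_def
proof (rule INF_greatest, clarify)
  fix P assume "eventually P (at x within A)"
  then obtain d where d: "d > 0" "\<forall>y\<in>A. y \<noteq> x \<and> dist y x < d \<longrightarrow> P y"
    unfolding eventually_at by blast
  obtain y where "y \<in> A" "y \<noteq> x" "dist y x < d" "0 \<le> f y" using assms[OF d(1)] by blast
  hence "P y" "0 \<le> f y" using d by auto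
  thus "0 \<le> (SUP y\<in>{y. P y}. f y)" by (intro SUP_upper2[of y]) auto
qed



lemma uS_half:
  fixes y :: "'a::euclidean_space"
  assumes S: "1 \<le> S" and y: "norm y \<le> 1/2"
  shows "uS S y = -1"
proof -
  have S0: "0 < S" using S by simp
  have y1: "norm y < 1" using y by simp
  have p: "1/2 \<le> 1 - norm y" using y by simp
  have "ln (1/2) \<le> ln (1 - norm y)" using p by (subst ln_le_cancel_iff) auto
  hence "psi y \<le> ln 2" unfolding psi_def by (simp add: ln_div)
  also have "\<dots> \<le> S" using ln_2_less_1 S by simp
  finally show ?thesis using uS_psi[OF S0 y1] hS_small[OF S0] by simp
qed

lemma uS_norm: "norm x = norm y \<Longrightarrow> uS S x = uS S y"
  unfolding uS_def by simp

lemma grad_bounds: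
  fixes x :: "'a::euclidean_space"
  assumes dim: "DIM('a) \<ge> 2" and S: "1 \<le> S" and x: "x \<in> ball 0 1"
  shows "0 \<le> metric_grad (finsler_dist funk_F (ball (0::'a) 1)) (ball 0 1) (uS S) x"
    and "metric_grad (finsler_dist funk_F (ball (0::'a) 1)) (ball 0 1) (uS S) x \<le> ereal (1 / S)"
proof -
  have S0: "0 < S" using S by simp
  show "metric_grad (finsler_dist funk_F (ball (0::'a) 1)) (ball 0 1) (uS S) x \<le> ereal (1 / S)"
    unfolding metric_grad_def
  proof (rule Limsup_bounded)
    show "eventually (\<lambda>y. ereal ((uS S y - uS S x) / finsler_dist funk_F (ball 0 1) x y) \<le> ereal (1 / S))
          (at x within ball 0 1)"
      unfolding eventually_at using ratio_upper[OF S0 x] by (intro exI[of _ 1]) auto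
  qed
  show "0 \<le> metric_grad (finsler_dist funk_F (ball (0::'a) 1)) (ball 0 1) (uS S) x"
    unfolding metric_grad_def
  proof (rule Limsup_ge0)
    fix d :: real assume d: "0 < d"
    obtain y where y: "y \<in> ball 0 1" "y \<noteq> x" "dist y x < d" "uS S y = uS S x"
    proof (cases "x = 0")
      case True
      obtain b :: 'a where b: "b \<in> Basis" using nonempty_Basis by blast
      define y where "y = min (d/2) (1/2) *\<^sub>R b"
      have ny: "norm y = min (d/2) (1/2)" unfolding y_def using b d by simp
      show ?thesis
      proof (rule that[of y])
        show "y \<in> ball 0 1" using ny by simp
        show "y \<noteq> x" using ny d True by auto
        show "dist y x < d" using ny d True by simp
        show "uS S y = uS S x" using uS_half[OF S, of y] uS_half[OF S, of x] ny True by simp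
      qed
    next
      case False
      have conn: "connected (sphere (0::'a) (norm x))" by (rule connected_sphere[OF dim])
      have xs: "x \<in> sphere 0 (norm x)" by simp
      have ns: "sphere (0::'a) (norm x) \<noteq> {z}" for z
      proof
        assume "sphere (0::'a) (norm x) = {z}"
        moreover have "- x \<in> sphere 0 (norm x)" by simp
        ultimately have "x = z" "- x = z" using xs by blast+
        hence "x = - x" by simp
        hence "x + x = 0" using eq_neg_iff_add_eq_0 by blast
        hence "(2::real) *\<^sub>R x = 0" by (simp add: scaleR_2)
        thus False using False by simp
      qed
      have "x islimpt sphere 0 (norm x)" by (rule connected_imp_perfect[OF conn xs ns])
      then obtain y where y: "y \<in> sphere 0 (norm x)" "y \<noteq> x" "dist y x < d"
        using d unfolding islimpt_approachable by blast
      show ?thesis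
      proof (rule that[of y])
        show "y \<in> ball 0 1" using y x by simp
        show "uS S y = uS S x" using y by (intro uS_norm) simp
      qed (use y in auto)
    qed
    thus "\<exists>y\<in>ball 0 1. y \<noteq> x \<and> dist y x < d \<and>
            0 \<le> ereal ((uS S y - uS S x) / finsler_dist funk_F (ball 0 1) x y)"
      by (intro bexI[of _ y]) auto
  qed
qed

lemma grad_sq:
  fixes x :: "'a::euclidean_space"
  assumes dim: "DIM('a) \<ge> 2" and S: "1 \<le> S" and x: "x \<in> ball 0 1"
  shows "e2ennreal ((metric_grad (finsler_dist funk_F (ball (0::'a) 1)) (ball 0 1) (uS S) x)\<^sup>2) \<le> ennreal ((1/S)\<^sup>2)"
proof -
  let ?g = "metric_grad (finsler_dist funk_F (ball (0::'a) 1)) (ball 0 1) (uS S) x"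
  have lo: "0 \<le> ?g" and hi: "?g \<le> ereal (1/S)" using grad_bounds[OF dim S x] by auto
  obtain v where v: "?g = ereal v" "0 \<le> v" "v \<le> 1/S"
    using lo hi by (cases ?g) auto
  have "?g\<^sup>2 = ereal (v\<^sup>2)" unfolding v(1) by (simp add: power2_eq_square)
  moreover have "v\<^sup>2 \<le> (1/S)\<^sup>2" using v by (intro power_mono) auto
  ultimately show ?thesis by (simp add: ennreal_leI)
qed

lemma sets_bh: "sets (busemann_hausdorff funk_F (ball (0::'a::euclidean_space) 1)) = sets lborel"
  by (simp add: bh_eq)

lemma quot_bound:
  fixes S :: real
  assumes dim: "DIM('a::euclidean_space) \<ge> 2" and S: "1 \<le> S"
  shows "(\<integral>\<^sup>+x\<in>ball (0::'a) 1. e2ennreal ((metric_grad (finsler_dist funk_F (ball (0::'a) 1)) (ball 0 1) (uS S) x)\<^sup>2)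
            \<partial>busemann_hausdorff funk_F (ball 0 1)) /
        (\<integral>\<^sup>+x\<in>ball (0::'a) 1. ennreal ((uS S x)\<^sup>2) \<partial>busemann_hausdorff funk_F (ball 0 1))
       \<le> ennreal (2 ^ DIM('a) / S\<^sup>2)"
proof -
  let ?M = "busemann_hausdorff funk_F (ball (0::'a) 1)"
  let ?V = "Ball_Volume.unit_ball_vol (real DIM('a))"
  have V: "?V > 0" by (rule Ball_Volume.unit_ball_vol_pos) simp
  have S0: "0 < S" using S by simp
  define N where "N = (\<integral>\<^sup>+x\<in>ball (0::'a) 1. e2ennreal ((metric_grad (finsler_dist funk_F (ball (0::'a) 1)) (ball 0 1) (uS S) x)\<^sup>2) \<partial>?M)"
  define Dn where "Dn = (\<integral>\<^sup>+x\<in>ball (0::'a) 1. ennreal ((uS S x)\<^sup>2) \<partial>?M)"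
  have "N \<le> (\<integral>\<^sup>+x. ennreal ((1/S)\<^sup>2) * indicator (ball (0::'a) 1) x \<partial>?M)"
    unfolding N_def
  proof (rule nn_integral_mono)
    fix x :: 'a
    show "e2ennreal ((metric_grad (finsler_dist funk_F (ball (0::'a) 1)) (ball 0 1) (uS S) x)\<^sup>2) * indicator (ball 0 1) x
          \<le> ennreal ((1/S)\<^sup>2) * indicator (ball (0::'a) 1) x"
      using grad_sq[OF dim S, of x] by (cases "x \<in> ball 0 1") auto
  qed
  also have "\<dots> = ennreal ((1/S)\<^sup>2) * emeasure ?M (ball 0 1)"
    by (rule nn_integral_cmult_indicator) (simp add: sets_bh)
  also have "emeasure ?M (ball 0 1) = ennreal ?V"
    by (subst bh_emeasure) (auto simp: emeasure_ball)
  finally have Nb: "N \<le> ennreal ((1/S)\<^sup>2 * ?V)" using V by (simp add: ennreal_mult)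
  have "ennreal (?V * (1/2) ^ DIM('a)) = emeasure lborel (ball (0::'a) (1/2))"
    by (simp add: emeasure_ball)
  also have "\<dots> = emeasure ?M (ball (0::'a) (1/2))"
    by (subst bh_emeasure) auto
  also have "\<dots> = (\<integral>\<^sup>+x. indicator (ball (0::'a) (1/2)) x \<partial>?M)"
    by (rule nn_integral_indicator[symmetric]) (simp add: sets_bh)
  also have "\<dots> \<le> Dn"
    unfolding Dn_def
  proof (rule nn_integral_mono)
    fix x :: 'a
    show "indicator (ball (0::'a) (1/2)) x \<le> ennreal ((uS S x)\<^sup>2) * indicator (ball 0 1) x"
      using uS_half[OF S, of x] by (cases "x \<in> ball 0 (1/2)") (auto simp: indicator_def)
  qed
  finally have Db: "ennreal (?V * (1/2) ^ DIM('a)) \<le> Dn" .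
  have "0 < ennreal (?V * (1/2) ^ DIM('a))" using V by simp
  hence Dp: "0 < Dn" using Db by (rule order.strict_trans2)
  have "N \<le> ennreal (?V * (1/2) ^ DIM('a)) * ennreal (2 ^ DIM('a) / S\<^sup>2)"
  proof -
    have "(1/S)\<^sup>2 * ?V = (?V * (1/2) ^ DIM('a)) * (2 ^ DIM('a) / S\<^sup>2)"
      by (simp add: power_divide field_simps power_mult_distrib[symmetric])
    thus ?thesis using Nb V by (simp add: ennreal_mult[symmetric])
  qed
  also have "\<dots> \<le> Dn * ennreal (2 ^ DIM('a) / S\<^sup>2)" using Db by (rule mult_right_mono) simp
  finally have "N / Dn \<le> ennreal (2 ^ DIM('a) / S\<^sup>2)" by (intro divide_le_posI_ennreal Dp)
  thus ?thesis unfolding N_def Dn_def .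
qed



lemma part_b:
  assumes dim: "DIM('a::euclidean_space) \<ge> 2"
  shows "first_eigenvalue (finsler_dist funk_F (ball (0::'a) 1))
           (busemann_hausdorff funk_F (ball 0 1)) (ball 0 1) = 0"
proof -
  have ub: "first_eigenvalue (finsler_dist funk_F (ball (0::'a) 1))
           (busemann_hausdorff funk_F (ball 0 1)) (ball 0 1) \<le> ennreal (2 ^ DIM('a) / S\<^sup>2)"
    if S: "1 \<le> S" for S :: real
  proof -
    have S0: "0 < S" using S by simp
    have lip: "(exp (2 * S) / S)-lipschitz_on (ball (0::'a) 1) (uS S)"
      by (rule lipschitz_onI) (use uS_lip[OF S0] S0 in \<open>auto simp: dist_real_def\<close>)
    have cs: "compact (cball (0::'a) (1 - exp (- (2 * S))))" "cball (0::'a) (1 - exp (- (2 * S))) \<subseteq> ball 0 1"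
      "\<forall>x. x \<notin> cball (0::'a) (1 - exp (- (2 * S))) \<longrightarrow> uS S x = 0"
    proof -
      show "compact (cball (0::'a) (1 - exp (- (2 * S))))" by simp
      show "cball (0::'a) (1 - exp (- (2 * S))) \<subseteq> ball 0 1"
      proof
        fix t :: 'a assume "t \<in> cball 0 (1 - exp (- (2 * S)))"
        hence "norm t \<le> 1 - exp (- (2 * S))" by simp
        moreover have "exp (- (2 * S)) > 0" by simp
        ultimately have "norm t < 1" by linarith
        thus "t \<in> ball 0 1" by simp
      qed
      show "\<forall>x. x \<notin> cball (0::'a) (1 - exp (- (2 * S))) \<longrightarrow> uS S x = 0"
      proof (intro allI impI)
        fix x :: 'a assume "x \<notin> cball 0 (1 - exp (- (2 * S)))"
        hence "1 - exp (- (2 * S)) \<le> norm x" by simp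
        thus "uS S x = 0" by (rule uS_zero[OF S0])
      qed
    qed
    have u0: "uS S (0::'a) \<noteq> 0" using uS_half[OF S, of "0::'a"] by simp
    have mem: "uS S \<in> {u. lip_compact_supp (ball (0::'a) 1) u \<and> (\<exists>x\<in>ball 0 1. u x \<noteq> 0)}"
      unfolding lip_compact_supp_def using lip cs u0 by blast
    show ?thesis unfolding first_eigenvalue_def
      by (rule order.trans[OF INF_lower[OF mem]]) (use quot_bound[OF dim S] in simp)
  qed
  have "first_eigenvalue (finsler_dist funk_F (ball (0::'a) 1))
           (busemann_hausdorff funk_F (ball 0 1)) (ball 0 1) \<le> 0"
  proof (rule ennreal_le_epsilon)
    fix e :: real assume e: "0 < e"
    define S where "S = max 1 (sqrt (2 ^ DIM('a) / e))"
    have S1: "1 \<le> S" unfolding S_def by simp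
    have "sqrt (2 ^ DIM('a) / e) \<le> S" unfolding S_def by simp
    hence "(sqrt (2 ^ DIM('a) / e))\<^sup>2 \<le> S\<^sup>2" using e by (intro power_mono) auto
    hence "2 ^ DIM('a) / e \<le> S\<^sup>2" using e by simp
    hence "2 ^ DIM('a) / S\<^sup>2 \<le> e" using e S1 by (simp add: field_simps)
    hence "ennreal (2 ^ DIM('a) / S\<^sup>2) \<le> ennreal e" by (rule ennreal_leI)
    thus "first_eigenvalue (finsler_dist funk_F (ball (0::'a) 1))
           (busemann_hausdorff funk_F (ball 0 1)) (ball 0 1) \<le> 0 + ennreal e"
      using ub[OF S1] by simp
  qed
  thus ?thesis by simp
qed

theorem mainTheorem5:
  assumes "DIM('a::euclidean_space) \<ge> 2"
  shows "(\<forall>\<rho>>0. area_fn (busemann_hausdorff funk_F (ball (0::'a) 1))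
                    (finsler_dist funk_F (ball 0 1)) (ball 0 1) 0 \<rho>
              = ereal (real DIM('a) * unit_ball_vol TYPE('a) * (1 - exp (- \<rho>)) ^ (DIM('a) - 1)
                       * exp (- \<rho>)))
       \<and> hyp_D DIM('a) (unit_ball_vol TYPE('a)) (busemann_hausdorff funk_F (ball (0::'a) 1))
           (finsler_dist funk_F (ball 0 1)) (ball 0 1) 0
       \<and> (\<forall>\<kappa>>0. hyp_BG DIM('a) \<kappa> (busemann_hausdorff funk_F (ball (0::'a) 1))
           (finsler_dist funk_F (ball 0 1)) (ball 0 1) 0)
       \<and> first_eigenvalue (finsler_dist funk_F (ball (0::'a) 1))
           (busemann_hausdorff funk_F (ball 0 1)) (ball 0 1) = 0"
  using area_formula part_D part_BG part_b[OF assms] by blast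

end
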